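(* Let $(\Omega,d)$ be a metric space, $E$ a non-trivial locally convex Hausdorff space over $\mathbb{K}$ and $\mathcal{FV}(\Omega)$ a dom-space such that $\mathcal{FV}(\Omega)\subset\mathcal{C}_u(\Omega)$ as a linear subspace. If the map $\delta\colon\Omega\to\mathcal{FV}(\Omega)'_\kappa$, $x\mapsto\delta_x$, is uniformly continuous, then $S(u)\in\mathcal{C}_u(\Omega,E)$ for all $u\in\mathcal{FV}(\Omega)\varepsilon E$.
   Context: $\mathbb{K}\in\{\mathbb{R},\mathbb{C}\}$. $\mathcal{C}_u(\Omega,E)$ denotes the uniformly continuous maps from $(\Omega,d)$ to $E$ (with its canonical uniform structure), $\mathcal{C}_u(\Omega):=\mathcal{C}_u(\Omega,\mathbb{K})$. Framework: $J,M$ non-empty index sets, $(\omega_m)_{m\in M}$ non-empty sets, $\nu_{j,m}\colon\omega_m\to[0,\infty)$ such that for all $m$, $x\in\omega_m$ some $\nu_{j,m}(x)>0$; $\operatorname{AP}(\Omega)\subset\mathbb{K}^\Omega$ a linear subspace; $T_m\colon\operatorname{dom}T_m\to\mathbb{K}^{\omega_m}$ linear maps on linear subspaces of $\mathbb{K}^\Omega$; $\mathcal{FV}(\Omega):=\{f\in\operatorname{AP}(\Omega)\cap\bigcap_m\operatorname{dom}T_m: |f|_{j,m}:=\sup_{x\in\omega_m}|T_m(f)(x)|\nu_{j,m}(x)<\infty\ \forall j,m\}$ with these seminorms. It is a dom-space if it is Hausdorff, the seminorms are directed and every $\delta_x\colon f\mapsto f(x)$ belongs to $\mathcal{FV}(\Omega)'$.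 $\mathcal{FV}(\Omega)'_\kappa$: dual with the topology of uniform convergence on absolutely convex compact subsets of $\mathcal{FV}(\Omega)$. $\mathcal{FV}(\Omega)\varepsilon E$: continuous linear maps $\mathcal{FV}(\Omega)'_\kappa\to E$ with the topology of uniform convergence on equicontinuous sets; $S(u)(x):=u(\delta_x)$. *)

theory Defs
  imports "HOL-Analysis.Analysis"
begin

text \<open>
The scalar field K is a type variable 'k of class real_normed_field
(instantiated by real and complex). The metric space Omega is the universe of a
type 'a of class metric_space.
Index sets J, M are the (non-empty) types 'j, 'm; all sets omega_m live in a
common type 'w.
\<close>

definition k_subspace :: "('a \<Rightarrow> 'k::field) set \<Rightarrow> bool" where
  "k_subspace A \<longleftrightarrow> (\<lambda>x. 0) \<in> A \<and>
     (\<forall>f\<in>A. \<forall>g\<in>A. \<forall>c. (\<lambda>x. c * f x + g x) \<in> A)"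

definition fv_framework ::
  "('a \<Rightarrow> 'k::real_normed_field) set \<Rightarrow> ('m \<Rightarrow> ('a \<Rightarrow> 'k) set) \<Rightarrow>
   ('m \<Rightarrow> ('a \<Rightarrow> 'k) \<Rightarrow> 'w \<Rightarrow> 'k) \<Rightarrow> ('m \<Rightarrow> 'w set) \<Rightarrow> ('j \<Rightarrow> 'm \<Rightarrow> 'w \<Rightarrow> real) \<Rightarrow> bool" where
  "fv_framework AP domT T \<omega> \<nu> \<longleftrightarrow>
     (\<forall>m. \<omega> m \<noteq> {}) \<and>
     (\<forall>j m. \<forall>x\<in>\<omega> m. 0 \<le> \<nu> j m x) \<and>
     (\<forall>m. \<forall>x\<in>\<omega> m. \<exists>j. 0 < \<nu> j m x) \<and>
     k_subspace AP \<and>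
     (\<forall>m. k_subspace (domT m)) \<and>
     (\<forall>m. \<forall>f\<in>domT m. \<forall>g\<in>domT m. \<forall>c.
        T m (\<lambda>x. c * f x + g x) = (\<lambda>w. c * T m f w + T m g w))"

definition FV ::
  "('a \<Rightarrow> 'k::real_normed_field) set \<Rightarrow> ('m \<Rightarrow> ('a \<Rightarrow> 'k) set) \<Rightarrow>
   ('m \<Rightarrow> ('a \<Rightarrow> 'k) \<Rightarrow> 'w \<Rightarrow> 'k) \<Rightarrow> ('m \<Rightarrow> 'w set) \<Rightarrow> ('j \<Rightarrow> 'm \<Rightarrow> 'w \<Rightarrow> real) \<Rightarrow> ('a \<Rightarrow> 'k) set" where
  "FV AP domT T \<omega> \<nu> = {f. f \<in> AP \<and> (\<forall>m. f \<in> domT m) \<and>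
     (\<forall>j m. bdd_above ((\<lambda>x. norm (T m f x) * \<nu> j m x) ` \<omega> m))}"

definition fv_sn ::
  "('m \<Rightarrow> ('a \<Rightarrow> 'k::real_normed_field) \<Rightarrow> 'w \<Rightarrow> 'k) \<Rightarrow> ('m \<Rightarrow> 'w set) \<Rightarrow> ('j \<Rightarrow> 'm \<Rightarrow> 'w \<Rightarrow> real) \<Rightarrow>
   'j \<Rightarrow> 'm \<Rightarrow> ('a \<Rightarrow> 'k) \<Rightarrow> real" where
  "fv_sn T \<omega> \<nu> j m f = (SUP x\<in>\<omega> m. norm (T m f x) * \<nu> j m x)"

text \<open>Continuous linear functionals on a space F with the seminorms sn, represented
extensionally (value 0 outside F).\<close>
definition cont_functional ::
  "('a \<Rightarrow> 'k::real_normed_field) set \<Rightarrow> ('j \<Rightarrow> 'm \<Rightarrow> ('a \<Rightarrow> 'k) \<Rightarrow> real) \<Rightarrow> (('a \<Rightarrow> 'k) \<Rightarrow> 'k) \<Rightarrow> bool" where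
  "cont_functional F sn y \<longleftrightarrow>
     (\<forall>f. f \<notin> F \<longrightarrow> y f = 0) \<and>
     (\<forall>f\<in>F. \<forall>g\<in>F. \<forall>c. y (\<lambda>x. c * f x + g x) = c * y f + y g) \<and>
     (\<exists>P C. finite P \<and> 0 \<le> C \<and> (\<forall>f\<in>F. norm (y f) \<le> C * (\<Sum>(j,m)\<in>P. sn j m f)))"

definition dual :: "('a \<Rightarrow> 'k::real_normed_field) set \<Rightarrow> ('j \<Rightarrow> 'm \<Rightarrow> ('a \<Rightarrow> 'k) \<Rightarrow> real) \<Rightarrow> (('a \<Rightarrow> 'k) \<Rightarrow> 'k) set" where
  "dual F sn = {y. cont_functional F sn y}"

definition delta :: "('a \<Rightarrow> 'k::real_normed_field) set \<Rightarrow> 'a \<Rightarrow> ('a \<Rightarrow> 'k) \<Rightarrow> 'k" where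
  "delta F x = (\<lambda>f. if f \<in> F then f x else 0)"

definition dom_space ::
  "('a \<Rightarrow> 'k::real_normed_field) set \<Rightarrow> ('j \<Rightarrow> 'm \<Rightarrow> ('a \<Rightarrow> 'k) \<Rightarrow> real) \<Rightarrow> bool" where
  "dom_space F sn \<longleftrightarrow>
     (\<forall>f\<in>F. (\<forall>j m. sn j m f = 0) \<longrightarrow> f = (\<lambda>x. 0)) \<and>
     (\<forall>j1 m1 j2 m2. \<exists>j3 m3 C. \<forall>f\<in>F. max (sn j1 m1 f) (sn j2 m2 f) \<le> C * sn j3 m3 f) \<and>
     (\<forall>x. delta F x \<in> dual F sn)"

definition fv_open :: "('a \<Rightarrow> 'k::real_normed_field) set \<Rightarrow> ('j \<Rightarrow> 'm \<Rightarrow> ('a \<Rightarrow> 'k) \<Rightarrow> real) \<Rightarrow> ('a \<Rightarrow> 'k) set \<Rightarrow> bool" where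
  "fv_open F sn U \<longleftrightarrow> U \<subseteq> F \<and>
     (\<forall>f\<in>U. \<exists>P e. finite P \<and> 0 < e \<and>
        {g\<in>F. (\<Sum>(j,m)\<in>P. sn j m (\<lambda>x. g x - f x)) < e} \<subseteq> U)"

definition fv_compact :: "('a \<Rightarrow> 'k::real_normed_field) set \<Rightarrow> ('j \<Rightarrow> 'm \<Rightarrow> ('a \<Rightarrow> 'k) \<Rightarrow> real) \<Rightarrow> ('a \<Rightarrow> 'k) set \<Rightarrow> bool" where
  "fv_compact F sn K \<longleftrightarrow> K \<subseteq> F \<and>
     (\<forall>\<U>. (\<forall>U\<in>\<U>. fv_open F sn U) \<and> K \<subseteq> \<Union>\<U> \<longrightarrow> (\<exists>\<V>\<subseteq>\<U>. finite \<V> \<and> K \<subseteq> \<Union>\<V>))"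

definition abs_convex :: "('a \<Rightarrow> 'k::real_normed_field) set \<Rightarrow> bool" where
  "abs_convex K \<longleftrightarrow> (\<forall>f\<in>K. \<forall>g\<in>K. \<forall>a b. norm a + norm b \<le> 1 \<longrightarrow> (\<lambda>x. a * f x + b * g x) \<in> K)"

definition kappa_sn :: "('a \<Rightarrow> 'k::real_normed_field) set \<Rightarrow> (('a \<Rightarrow> 'k) \<Rightarrow> 'k) \<Rightarrow> ennreal" where
  "kappa_sn K y = (SUP f\<in>K. ennreal (norm (y f)))"

definition acx_compacts :: "('a \<Rightarrow> 'k::real_normed_field) set \<Rightarrow> ('j \<Rightarrow> 'm \<Rightarrow> ('a \<Rightarrow> 'k) \<Rightarrow> real) \<Rightarrow> ('a \<Rightarrow> 'k) set set" where
  "acx_compacts F sn = {K. fv_compact F sn K \<and> abs_convex K}"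

definition lc_hausdorff :: "('k::real_normed_field \<Rightarrow> 'e::ab_group_add \<Rightarrow> 'e) \<Rightarrow> ('i \<Rightarrow> 'e \<Rightarrow> real) \<Rightarrow> bool" where
  "lc_hausdorff sc q \<longleftrightarrow> Vector_Spaces.vector_space sc \<and>
     (\<forall>i x. 0 \<le> q i x) \<and>
     (\<forall>i x y. q i (x + y) \<le> q i x + q i y) \<and>
     (\<forall>i c x. q i (sc c x) = norm c * q i x) \<and>
     (\<forall>x. (\<forall>i. q i x = 0) \<longrightarrow> x = 0)"

text \<open>FV(Omega) epsilon E: continuous linear maps from the dual with topology kappa to E.\<close>
definition eps_prod ::
  "('a \<Rightarrow> 'k::real_normed_field) set \<Rightarrow> ('j \<Rightarrow> 'm \<Rightarrow> ('a \<Rightarrow> 'k) \<Rightarrow> real) \<Rightarrow>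
   ('k \<Rightarrow> 'e::ab_group_add \<Rightarrow> 'e) \<Rightarrow> ('i \<Rightarrow> 'e \<Rightarrow> real) \<Rightarrow> ((('a \<Rightarrow> 'k) \<Rightarrow> 'k) \<Rightarrow> 'e) set" where
  "eps_prod F sn sc q = {u.
     (\<forall>y\<in>dual F sn. \<forall>z\<in>dual F sn. \<forall>a b.
        u (\<lambda>f. a * y f + b * z f) = sc a (u y) + sc b (u z)) \<and>
     (\<forall>i. \<exists>\<K> C. finite \<K> \<and> \<K> \<subseteq> acx_compacts F sn \<and> 0 \<le> C \<and>
        (\<forall>y\<in>dual F sn. ennreal (q i (u y)) \<le> ennreal C * (\<Sum>K\<in>\<K>. kappa_sn K y)))}"

definition delta_unif_cont :: "('a::metric_space \<Rightarrow> 'k::real_normed_field) set \<Rightarrow> ('j \<Rightarrow> 'm \<Rightarrow> ('a \<Rightarrow> 'k) \<Rightarrow> real) \<Rightarrow> bool" where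
  "delta_unif_cont F sn \<longleftrightarrow>
     (\<forall>\<K> e. finite \<K> \<and> \<K> \<subseteq> acx_compacts F sn \<and> 0 < e \<longrightarrow>
        (\<exists>\<eta>>0. \<forall>x y. dist x y < \<eta> \<longrightarrow>
           (\<Sum>K\<in>\<K>. kappa_sn K (\<lambda>f. delta F x f - delta F y f)) < ennreal e))"

definition unif_cont_E :: "('i \<Rightarrow> 'e::ab_group_add \<Rightarrow> real) \<Rightarrow> ('a::metric_space \<Rightarrow> 'e) \<Rightarrow> bool" where
  "unif_cont_E q g \<longleftrightarrow>
     (\<forall>I e. finite I \<and> 0 < e \<longrightarrow>
        (\<exists>\<eta>>0. \<forall>x y. dist x y < \<eta> \<longrightarrow> (\<Sum>i\<in>I. q i (g x - g y)) < e))"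

end

theory Submission
  imports Defs
begin

lemma dual_diff:
  assumes nn: "\<forall>f\<in>F. \<forall>j m. 0 \<le> sn j m f"
    and y: "y \<in> dual F sn" and z: "z \<in> dual F sn"
  shows "(\<lambda>f. y f - z f) \<in> dual F sn"
proof -
  from y obtain P1 C1 where P1: "finite P1" "0 \<le> C1"
      "\<forall>f\<in>F. norm (y f) \<le> C1 * (\<Sum>(j,m)\<in>P1. sn j m f)"
    and y0: "\<forall>f. f \<notin> F \<longrightarrow> y f = 0"
    and yl: "\<forall>f\<in>F. \<forall>g\<in>F. \<forall>c. y (\<lambda>x. c * f x + g x) = c * y f + y g"
    unfolding dual_def cont_functional_def by blast
  from z obtain P2 C2 where P2: "finite P2" "0 \<le> C2"
      "\<forall>f\<in>F. norm (z f) \<le> C2 * (\<Sum>(j,m)\<in>P2. sn j m f)"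
    and z0: "\<forall>f. f \<notin> F \<longrightarrow> z f = 0"
    and zl: "\<forall>f\<in>F. \<forall>g\<in>F. \<forall>c. z (\<lambda>x. c * f x + g x) = c * z f + z g"
    unfolding dual_def cont_functional_def by blast
  have bnd: "norm (y f - z f) \<le> (C1 + C2) * (\<Sum>(j,m)\<in>P1 \<union> P2. sn j m f)" if f: "f \<in> F" for f
  proof -
    let ?S = "\<Sum>(j,m)\<in>P1 \<union> P2. sn j m f"
    have s1: "(\<Sum>(j,m)\<in>P1. sn j m f) \<le> ?S"
      by (rule sum_mono2) (use P1 P2 nn f in auto)
    have s2: "(\<Sum>(j,m)\<in>P2. sn j m f) \<le> ?S"
      by (rule sum_mono2) (use P1 P2 nn f in auto)
    have "norm (y f - z f) \<le> norm (y f) + norm (z f)" by (rule norm_triangle_ineq4)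
    also have "\<dots> \<le> C1 * (\<Sum>(j,m)\<in>P1. sn j m f) + C2 * (\<Sum>(j,m)\<in>P2. sn j m f)"
      using P1 P2 f by (meson add_mono)
    also have "\<dots> \<le> C1 * ?S + C2 * ?S"
      using s1 s2 P1(2) P2(2) by (meson add_mono mult_left_mono)
    finally show ?thesis by (simp add: algebra_simps)
  qed
  show ?thesis
    unfolding dual_def cont_functional_def mem_Collect_eq
  proof (intro conjI)
    show "\<forall>f. f \<notin> F \<longrightarrow> y f - z f = 0" using y0 z0 by simp
    show "\<forall>f\<in>F. \<forall>g\<in>F. \<forall>c. y (\<lambda>x. c * f x + g x) - z (\<lambda>x. c * f x + g x) = c * (y f - z f) + (y g - z g)"
      using yl zl by (simp add: algebra_simps)
    show "\<exists>P C. finite P \<and> 0 \<le> C \<and> (\<forall>f\<in>F. norm (y f - z f) \<le> C * (\<Sum>(j,m)\<in>P. sn j m f))"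
      using bnd P1 P2 by (intro exI[of _ "P1 \<union> P2"] exI[of _ "C1 + C2"]) auto
  qed
qed

lemma sn_nonneg:
  assumes frame: "fv_framework AP domT T \<omega> \<nu>" and f: "f \<in> FV AP domT T \<omega> \<nu>"
  shows "0 \<le> fv_sn T \<omega> \<nu> j m f"
proof -
  from frame obtain x where x: "x \<in> \<omega> m" unfolding fv_framework_def by blast
  have bdd: "bdd_above ((\<lambda>x. norm (T m f x) * \<nu> j m x) ` \<omega> m)" using f unfolding FV_def by simp
  have "0 \<le> norm (T m f x) * \<nu> j m x" using frame x unfolding fv_framework_def by auto
  also have "\<dots> \<le> fv_sn T \<omega> \<nu> j m f" unfolding fv_sn_def by (rule cSUP_upper[OF x bdd])
  finally show ?thesis .
qed

theorem proposition4p6: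
  fixes AP :: "('a::metric_space \<Rightarrow> 'k::real_normed_field) set"
    and domT :: "'m \<Rightarrow> ('a \<Rightarrow> 'k) set"
    and T :: "'m \<Rightarrow> ('a \<Rightarrow> 'k) \<Rightarrow> 'w \<Rightarrow> 'k"
    and \<omega> :: "'m \<Rightarrow> 'w set"
    and \<nu> :: "'j \<Rightarrow> 'm \<Rightarrow> 'w \<Rightarrow> real"
    and sc :: "'k \<Rightarrow> 'e::ab_group_add \<Rightarrow> 'e"
    and q :: "'i \<Rightarrow> 'e \<Rightarrow> real"
  assumes frame: "fv_framework AP domT T \<omega> \<nu>"
    and E: "lc_hausdorff sc q"
    and E_nontriv: "\<exists>e::'e. e \<noteq> 0"
    and dom: "dom_space (FV AP domT T \<omega> \<nu>) (fv_sn T \<omega> \<nu>)"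
    and Cu: "\<forall>f\<in>FV AP domT T \<omega> \<nu>. uniformly_continuous_on UNIV f"
    and \<delta>: "delta_unif_cont (FV AP domT T \<omega> \<nu>) (fv_sn T \<omega> \<nu>)"
  shows "\<forall>u\<in>eps_prod (FV AP domT T \<omega> \<nu>) (fv_sn T \<omega> \<nu>) sc q.
           unif_cont_E q (\<lambda>x. u (delta (FV AP domT T \<omega> \<nu>) x))"
proof
  define F where "F = FV AP domT T \<omega> \<nu>"
  define sn where "sn = fv_sn T \<omega> \<nu>"
  fix u assume u: "u \<in> eps_prod (FV AP domT T \<omega> \<nu>) (fv_sn T \<omega> \<nu>) sc q"
  hence ulin: "\<forall>y\<in>dual F sn. \<forall>z\<in>dual F sn. \<forall>a b.
        u (\<lambda>f. a * y f + b * z f) = sc a (u y) + sc b (u z)"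
    and ubnd: "\<forall>i. \<exists>\<K> C. finite \<K> \<and> \<K> \<subseteq> acx_compacts F sn \<and> 0 \<le> C \<and>
        (\<forall>y\<in>dual F sn. ennreal (q i (u y)) \<le> ennreal C * (\<Sum>K\<in>\<K>. kappa_sn K y))"
    unfolding eps_prod_def F_def sn_def by auto
  from ubnd obtain KK CC where KK: "\<And>i. finite (KK i)" "\<And>i. KK i \<subseteq> acx_compacts F sn"
      "\<And>i. 0 \<le> CC i"
      "\<And>i y. y \<in> dual F sn \<Longrightarrow> ennreal (q i (u y)) \<le> ennreal (CC i) * (\<Sum>K\<in>KK i. kappa_sn K y)"
    by metis
  have vs: "Vector_Spaces.vector_space sc" using E unfolding lc_hausdorff_def by blast
  have md: "module sc" using vs by (simp add: vector_space_def module_def)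
  have sc1: "sc 1 v = v" for v using module.scale_one[OF md] .
  have scm: "sc (-1) v = - v" for v using module.scale_minus_left[OF md, of 1 v] module.scale_one[OF md] by simp
  have nn: "\<forall>f\<in>F. \<forall>j m. 0 \<le> sn j m f" using sn_nonneg[OF frame] unfolding F_def sn_def by blast
  have dl: "delta F x \<in> dual F sn" for x using dom unfolding dom_space_def F_def sn_def by blast
  have diff: "u (delta F x) - u (delta F y) = u (\<lambda>f. delta F x f - delta F y f)" for x y
  proof -
    have "u (\<lambda>f. 1 * delta F x f + (-1) * delta F y f) = sc 1 (u (delta F x)) + sc (-1) (u (delta F y))"
      using ulin dl by blast
    thus ?thesis by (simp add: sc1 scm)
  qed
  have ddual: "(\<lambda>f. delta F x f - delta F y f) \<in> dual F sn" for x y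
    using dual_diff[OF nn dl dl] .
  show "unif_cont_E q (\<lambda>x. u (delta (FV AP domT T \<omega> \<nu>) x))"
    unfolding unif_cont_E_def F_def[symmetric]
  proof (intro allI impI)
    fix I :: "'i set" and e :: real
    assume Ie: "finite I \<and> 0 < e"
    define KS where "KS = (\<Union>i\<in>I. KK i)"
    define C where "C = (\<Sum>i\<in>I. CC i)"
    have C0: "0 \<le> C" unfolding C_def using KK(3) by (simp add: sum_nonneg)
    have CCle: "CC i \<le> C" if "i \<in> I" for i
      unfolding C_def using Ie that KK(3) by (intro member_le_sum) auto
    define e' where "e' = e / ((real (card I) + 1) * (C + 1))"
    have e'0: "0 < e'" unfolding e'_def using Ie C0 by auto
    have KSf: "finite KS" unfolding KS_def using Ie KK(1) by auto
    have KSs: "KS \<subseteq> acx_compacts F sn" unfolding KS_def using KK(2) by auto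
    obtain \<eta> where \<eta>: "\<eta> > 0" "\<And>x y. dist x y < \<eta> \<Longrightarrow>
           (\<Sum>K\<in>KS. kappa_sn K (\<lambda>f. delta F x f - delta F y f)) < ennreal e'"
      using \<delta> KSf KSs e'0 unfolding delta_unif_cont_def F_def[symmetric] sn_def[symmetric] by blast
    show "\<exists>\<eta>>0. \<forall>x y. dist x y < \<eta> \<longrightarrow> (\<Sum>i\<in>I. q i (u (delta F x) - u (delta F y))) < e"
    proof (intro exI conjI allI impI)
      show "\<eta> > 0" by fact
      fix x y :: 'a assume dxy: "dist x y < \<eta>"
      let ?d = "\<lambda>f. delta F x f - delta F y f"
      have each: "q i (u (delta F x) - u (delta F y)) \<le> C * e'" if i: "i \<in> I" for i
      proof -
        have "ennreal (q i (u ?d)) \<le> ennreal (CC i) * (\<Sum>K\<in>KK i. kappa_sn K ?d)"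
          using KK(4)[OF ddual] .
        also have "\<dots> \<le> ennreal C * (\<Sum>K\<in>KS. kappa_sn K ?d)"
        proof (rule mult_mono)
          show "ennreal (CC i) \<le> ennreal C" using CCle[OF i] by (rule ennreal_leI)
          show "(\<Sum>K\<in>KK i. kappa_sn K ?d) \<le> (\<Sum>K\<in>KS. kappa_sn K ?d)"
            by (rule sum_mono2[OF KSf]) (use i in \<open>auto simp: KS_def\<close>)
        qed auto
        also have "\<dots> \<le> ennreal C * ennreal e'"
          using \<eta>(2)[OF dxy] by (intro mult_left_mono) auto
        also have "\<dots> = ennreal (C * e')" using C0 e'0 by (simp add: ennreal_mult)
        finally have "ennreal (q i (u ?d)) \<le> ennreal (C * e')" .
        hence "q i (u ?d) \<le> C * e'" using C0 e'0 by (simp add: ennreal_le_iff)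
        thus ?thesis using diff by simp
      qed
      have "(\<Sum>i\<in>I. q i (u (delta F x) - u (delta F y))) \<le> (\<Sum>i\<in>I. C * e')"
        using each by (rule sum_mono)
      also have "\<dots> = real (card I) * C * e'" by simp
      also have "\<dots> < e"
      proof -
        have "real (card I) * C \<le> (real (card I) + 1) * (C + 1) - 1" using C0
          by (simp add: algebra_simps)
        hence "real (card I) * C < (real (card I) + 1) * (C + 1)" by simp
        hence "real (card I) * C * e' < (real (card I) + 1) * (C + 1) * e'"
          using e'0 by (simp add: mult_strict_right_mono)
        also have "\<dots> = e" unfolding e'_def using C0 by simp
        finally show ?thesis .
      qed
      finally show "(\<Sum>i\<in>I. q i (u (delta F x) - u (delta F y))) < e" .
    qed
  qed
qed

end
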